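(* Let $L$ be a finite lattice with at least three elements, with minimum $\hat 0$ and maximum $\hat 1$, and let $a,b\in L$ with $\hat 0<a<b$. Then $$\sum_{\substack{x\in L\\ x\wedge a=\hat 0}} J(x,b,\hat 1)=0,$$ where terms with $x\not\le b$ are omitted (i.e. $J(x,b,\hat 1)$ is taken as $0$ unless $x\le b$).
   Context: Let $\delta_3(x,y,z)=1$ if $x=y=z$ and $0$ otherwise. The function $J$ on triples $x\le y\le z$ of $L$ is the unique integer-valued function satisfying $\sum_{x\le a\le y\le b\le z}J(a,y,b)=\delta_3(x,y,z)$ for all $x\le y\le z$ in $L$ (sum over $a,b\in L$). *)

theory Defs
  imports Main
begin

definition delta3 :: "'a \<Rightarrow> 'a \<Rightarrow> 'a \<Rightarrow> int" where
  "delta3 x y z = (if x = y \<and> y = z then 1 else 0)"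

text \<open>Outside triples x <= y <= z it is fixed to be 0, so that THE is well defined.\<close>
definition J :: "'a::{finite,bounded_lattice} \<Rightarrow> 'a \<Rightarrow> 'a \<Rightarrow> int" where
  "J = (THE f. (\<forall>x y z. x \<le> y \<and> y \<le> z \<longrightarrow>
              (\<Sum>(a, b) \<in> {(a, b). x \<le> a \<and> a \<le> y \<and> y \<le> b \<and> b \<le> z}. f a y b)
                = delta3 x y z)
         \<and> (\<forall>x y z. \<not> (x \<le> y \<and> y \<le> z) \<longrightarrow> f x y z = 0))"

end

theory Submission
  imports Defs
begin

function muR :: "'a::{finite,order} \<Rightarrow> 'a \<Rightarrow> int" where
  "muR x y = (if x = y then 1 else if x \<le> y then - (\<Sum>z \<in> {x..<y}. muR x z) else 0)"
  by auto
termination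
proof (relation "measure (\<lambda>(x,y). card {w. w < y})")
  fix x y :: 'a and z
  assume "z \<in> {x..<y}"
  then have "{w. w < z} \<subset> {w. w < y}" by auto
  then show "((x, z), x, y) \<in> measure (\<lambda>(x, y). card {w. w < y})"
    by (simp add: psubset_card_mono)
qed auto

function muL :: "'a::{finite,order} \<Rightarrow> 'a \<Rightarrow> int" where
  "muL x y = (if x = y then 1 else if x \<le> y then - (\<Sum>z \<in> {x<..y}. muL z y) else 0)"
  by auto
termination
proof (relation "measure (\<lambda>(x,y). card {w. x < w})")
  fix x y :: 'a and z
  assume "z \<in> {x<..y}"
  then have "{w. z < w} \<subset> {w. x < w}" by auto
  then show "((z, y), x, y) \<in> measure (\<lambda>(x, y). card {w. x < w})"
    by (simp add: psubset_card_mono)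
qed auto

declare muR.simps[simp del] muL.simps[simp del]

lemma muR_sum:
  fixes x y :: "'a::{finite,order}"
  assumes "x \<le> y"
  shows "(\<Sum>z\<in>{x..y}. muR x z) = (if x = y then 1 else 0)"
proof -
  have "{x..y} = insert y {x..<y}" using assms by auto
  then have "(\<Sum>z\<in>{x..y}. muR x z) = muR x y + (\<Sum>z\<in>{x..<y}. muR x z)" by simp
  then show ?thesis using assms by (simp add: muR.simps[of x y])
qed

lemma muL_sum:
  fixes x y :: "'a::{finite,order}"
  assumes "x \<le> y"
  shows "(\<Sum>z\<in>{x..y}. muL z y) = (if x = y then 1 else 0)"
proof -
  have "{x..y} = insert x {x<..y}" using assms by auto
  then have "(\<Sum>z\<in>{x..y}. muL z y) = muL x y + (\<Sum>z\<in>{x<..y}. muL z y)" by simp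
  then show ?thesis using assms by (simp add: muL.simps[of x y])
qed

definition Sset :: "'a::order \<Rightarrow> 'a \<Rightarrow> 'a \<Rightarrow> ('a \<times> 'a) set" where
  "Sset x y z = {(a, b). x \<le> a \<and> a \<le> y \<and> y \<le> b \<and> b \<le> z}"

lemma uniq:
  fixes f h :: "'a::{finite,order} \<Rightarrow> 'a \<Rightarrow> 'a \<Rightarrow> int"
  assumes H: "\<forall>x y z. x \<le> y \<and> y \<le> z \<longrightarrow>
      (\<Sum>(a, b) \<in> Sset x y z. f a y b) = (\<Sum>(a, b) \<in> Sset x y z. h a y b)"
  shows "x \<le> y \<Longrightarrow> y \<le> z \<Longrightarrow> f x y z = h x y z"
proof (induction "card {x..y} + card {y..z}" arbitrary: x z rule: less_induct)
  case less
  have fin: "finite (Sset x y z)" by simp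
  have mem: "(x, z) \<in> Sset x y z" using less by (simp add: Sset_def)
  have rest: "(\<Sum>(a, b) \<in> Sset x y z - {(x,z)}. f a y b) = (\<Sum>(a, b) \<in> Sset x y z - {(x,z)}. h a y b)"
  proof (rule sum.cong[OF refl])
    fix p assume p: "p \<in> Sset x y z - {(x, z)}"
    obtain a b where pab: "p = (a, b)" by fastforce
    have ab: "x \<le> a" "a \<le> y" "y \<le> b" "b \<le> z" "(a,b) \<noteq> (x,z)" using p pab by (auto simp: Sset_def)
    have s1: "{a..y} \<subseteq> {x..y}" "{y..b} \<subseteq> {y..z}" using ab by auto
    have c1: "card {a..y} \<le> card {x..y}" "card {y..b} \<le> card {y..z}"
      using s1 by (simp_all add: card_mono)
    have "a \<noteq> x \<or> b \<noteq> z" using ab by auto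
    then have "card {a..y} < card {x..y} \<or> card {y..b} < card {y..z}"
    proof
      assume "a \<noteq> x"
      then have "{a..y} \<subset> {x..y}" using ab s1 by auto
      then show ?thesis by (simp add: psubset_card_mono)
    next
      assume "b \<noteq> z"
      then have "{y..b} \<subset> {y..z}" using ab s1 by auto
      then show ?thesis by (simp add: psubset_card_mono)
    qed
    then have "card {a..y} + card {y..b} < card {x..y} + card {y..z}" using c1 by linarith
    then have "f a y b = h a y b" using less.hyps ab by blast
    then show "(case p of (a, b) \<Rightarrow> f a y b) = (case p of (a, b) \<Rightarrow> h a y b)" using pab by simp
  qed
  have "(\<Sum>(a, b) \<in> Sset x y z. f a y b) = f x y z + (\<Sum>(a, b) \<in> Sset x y z - {(x,z)}. f a y b)"
    using sum.remove[OF fin mem, of "\<lambda>(a,b). f a y b"] by simp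
  moreover have "(\<Sum>(a, b) \<in> Sset x y z. h a y b) = h x y z + (\<Sum>(a, b) \<in> Sset x y z - {(x,z)}. h a y b)"
    using sum.remove[OF fin mem, of "\<lambda>(a,b). h a y b"] by simp
  ultimately show ?case using H less.prems rest by simp
qed

lemma Sset_prod: "x \<le> y \<Longrightarrow> y \<le> z \<Longrightarrow> Sset x y z = {x..y} \<times> {y..z}"
  by (auto simp: Sset_def)

lemma J_eq:
  "J = (\<lambda>x y (z::'a::{finite,bounded_lattice}). if x \<le> y \<and> y \<le> z then muL x y * muR y z else 0)"
  unfolding J_def
proof (rule the_equality)
  let ?g = "(\<lambda>x y (z::'a). if x \<le> y \<and> y \<le> z then muL x y * muR y z else 0)"
  show "(\<forall>x y z. x \<le> y \<and> y \<le> z \<longrightarrow>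
              (\<Sum>(a, b) \<in> {(a, b). x \<le> a \<and> a \<le> y \<and> y \<le> b \<and> b \<le> z}. ?g a y b)
                = delta3 x y z)
         \<and> (\<forall>x y z. \<not> (x \<le> y \<and> y \<le> z) \<longrightarrow> ?g x y z = 0)"
  proof (intro conjI allI impI)
    fix x y z :: 'a assume xyz: "x \<le> y \<and> y \<le> z"
    have "(\<Sum>(a, b) \<in> {(a, b). x \<le> a \<and> a \<le> y \<and> y \<le> b \<and> b \<le> z}. ?g a y b)
        = (\<Sum>(a, b) \<in> {x..y} \<times> {y..z}. muL a y * muR y b)"
      using xyz by (intro sum.cong) (auto simp: Sset_prod[symmetric] Sset_def)
    also have "\<dots> = (\<Sum>a\<in>{x..y}. muL a y) * (\<Sum>b\<in>{y..z}. muR y b)"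
      by (simp add: sum_product sum.cartesian_product)
    also have "\<dots> = delta3 x y z" using xyz by (simp add: muL_sum muR_sum delta3_def)
    finally show "(\<Sum>(a, b) \<in> {(a, b). x \<le> a \<and> a \<le> y \<and> y \<le> b \<and> b \<le> z}. ?g a y b) = delta3 x y z" .
  next
    fix x y z :: 'a assume "\<not> (x \<le> y \<and> y \<le> z)"
    then show "?g x y z = 0" by auto
  qed
next
  let ?g = "(\<lambda>x y (z::'a). if x \<le> y \<and> y \<le> z then muL x y * muR y z else 0)"
  fix f :: "'a \<Rightarrow> 'a \<Rightarrow> 'a \<Rightarrow> int"
  assume A: "(\<forall>x y z. x \<le> y \<and> y \<le> z \<longrightarrow>
              (\<Sum>(a, b) \<in> {(a, b). x \<le> a \<and> a \<le> y \<and> y \<le> b \<and> b \<le> z}. f a y b)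
                = delta3 x y z)
         \<and> (\<forall>x y z. \<not> (x \<le> y \<and> y \<le> z) \<longrightarrow> f x y z = 0)"
  have B: "(\<forall>x y z. x \<le> y \<and> y \<le> z \<longrightarrow>
              (\<Sum>(a, b) \<in> {(a, b). x \<le> a \<and> a \<le> y \<and> y \<le> b \<and> b \<le> z}. ?g a y b)
                = delta3 x y z)"
  proof (intro allI impI)
    fix x y z :: 'a assume xyz: "x \<le> y \<and> y \<le> z"
    have "(\<Sum>(a, b) \<in> {(a, b). x \<le> a \<and> a \<le> y \<and> y \<le> b \<and> b \<le> z}. ?g a y b)
        = (\<Sum>(a, b) \<in> {x..y} \<times> {y..z}. muL a y * muR y b)"
      using xyz by (intro sum.cong) (auto simp: Sset_prod[symmetric] Sset_def)
    also have "\<dots> = (\<Sum>a\<in>{x..y}. muL a y) * (\<Sum>b\<in>{y..z}. muR y b)"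
      by (simp add: sum_product sum.cartesian_product)
    also have "\<dots> = delta3 x y z" using xyz by (simp add: muL_sum muR_sum delta3_def)
    finally show "(\<Sum>(a, b) \<in> {(a, b). x \<le> a \<and> a \<le> y \<and> y \<le> b \<and> b \<le> z}. ?g a y b) = delta3 x y z" .
  qed
  have H: "\<forall>x y z. x \<le> y \<and> y \<le> z \<longrightarrow>
      (\<Sum>(a, b) \<in> Sset x y z. f a y b) = (\<Sum>(a, b) \<in> Sset x y z. ?g a y b)"
    using A B unfolding Sset_def by simp
  show "f = ?g"
  proof (intro ext)
    fix x y z :: 'a
    show "f x y z = ?g x y z"
    proof (cases "x \<le> y \<and> y \<le> z")
      case True
      then show ?thesis using uniq[OF H] by blast
    next
      case False
      then show ?thesis using A by auto
    qed
  qed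
qed

theorem theorem5p10:
  fixes a b :: "'a::{finite,bounded_lattice}"
  assumes "card (UNIV :: 'a set) \<ge> 3"
    and "bot < a" and "a < b"
  shows "(\<Sum>x \<in> {x. inf x a = bot \<and> x \<le> b}. J x b top) = 0"
proof -
  have ind: "(if inf x a = bot then 1 else 0) = (\<Sum>y\<in>{..inf x a}. muR bot y)" for x
    using muR_sum[of bot "inf x a"] by (simp add: atLeastAtMost_def atLeast_def)
  have "(\<Sum>x \<in> {x. inf x a = bot \<and> x \<le> b}. muL x b)
      = (\<Sum>x\<in>{..b}. muL x b * (if inf x a = bot then 1 else 0))"
  proof -
    have "{x. inf x a = bot \<and> x \<le> b} = {x\<in>{..b}. inf x a = bot}" by auto
    then show ?thesis by (simp add: sum.inter_filter[symmetric] if_distrib cong: if_cong)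
  qed
  also have "\<dots> = (\<Sum>x\<in>{..b}. \<Sum>y\<in>{..inf x a}. muL x b * muR bot y)"
    by (simp add: ind sum_distrib_left)
  also have "\<dots> = (\<Sum>x\<in>{..b}. \<Sum>y\<in>{..a}. if y \<le> x then muL x b * muR bot y else 0)"
  proof (rule sum.cong[OF refl])
    fix x
    have "{..inf x a} = {y\<in>{..a}. y \<le> x}" by auto
    then show "(\<Sum>y\<in>{..inf x a}. muL x b * muR bot y) = (\<Sum>y\<in>{..a}. if y \<le> x then muL x b * muR bot y else 0)"
      by (simp only: sum.inter_filter[OF finite])
  qed
  also have "\<dots> = (\<Sum>y\<in>{..a}. \<Sum>x\<in>{..b}. if y \<le> x then muL x b * muR bot y else 0)"
    by (rule sum.swap)
  also have "\<dots> = (\<Sum>y\<in>{..a}. muR bot y * (\<Sum>x\<in>{y..b}. muL x b))"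
  proof (rule sum.cong[OF refl])
    fix y
    have "{y..b} = {x\<in>{..b}. y \<le> x}" by auto
    then show "(\<Sum>x\<in>{..b}. if y \<le> x then muL x b * muR bot y else 0) = muR bot y * (\<Sum>x\<in>{y..b}. muL x b)"
      by (simp add: sum.inter_filter[symmetric] sum_distrib_left mult.commute)
  qed
  also have "\<dots> = 0"
  proof (rule sum.neutral, rule ballI)
    fix y assume "y \<in> {..a}"
    then have "y \<le> a" by simp
    with assms(3) have "y \<le> b" "y \<noteq> b" by auto
    then show "muR bot y * (\<Sum>x\<in>{y..b}. muL x b) = 0" by (simp add: muL_sum)
  qed
  finally have Z: "(\<Sum>x \<in> {x. inf x a = bot \<and> x \<le> b}. muL x b) = 0" .
  have "(\<Sum>x \<in> {x. inf x a = bot \<and> x \<le> b}. J x b top)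
      = (\<Sum>x \<in> {x. inf x a = bot \<and> x \<le> b}. muL x b) * muR b top"
    by (simp add: J_eq sum_distrib_right)
  then show ?thesis using Z by simp
qed

end
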